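(* Let $k$ be an odd positive integer and $m$ a positive integer. Then: (1) every integer of the form $p_1^{2^{m+1}k-1}$ with $p_1$ prime is $2^mk$-$T_0T^\ast$-perfect; (2) if $k>1$ and there exist integers $d_1,\dots,d_{m+2}>1$ with $d_1\cdots d_{m+2}=k$ (a multiplicative partition of $k$) such that $d_i\equiv 1\pmod{2^{m+1}}$ for all $i$, then every integer of the form $p_1^{(d_1-1)/2^{m+1}}\cdots p_{m+2}^{(d_{m+2}-1)/2^{m+1}}$ with distinct primes $p_1,\dots,p_{m+2}$ is $2^mk$-$T_0T^\ast$-perfect; (3) every $2^mk$-$T_0T^\ast$-perfect number $n>1$ is either of the form $p_1^{2^{m+1}k-1}$ with $p_1$ prime, or of the form $p_1^{(d_1-1)/2^{m+1}}\cdots p_{m+2}^{(d_{m+2}-1)/2^{m+1}}$ with distinct primes $p_i$ and integers $d_1,\dots,d_{m+2}>1$ as in (2).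
   Context: For a positive integer $m'$, $T(m')$ denotes the product of all positive divisors of $m'$, and $T^\ast(m')$ the product of all unitary divisors of $m'$ (divisors $d$ with $\gcd(d,m'/d)=1$). For an integer $K\ge 2$, an integer $n>1$ is called $K$-$T_0T^\ast$-perfect if $T(T^\ast(n))=n^K$. A multiplicative partition of an integer $N>1$ is an unordered factorization of $N$ as a product of integers in $\{1,\dots,N\}$. *)

theory Defs
  imports "HOL-Computational_Algebra.Primes" "HOL-Number_Theory.Cong"
begin

definition divprod :: "nat \<Rightarrow> nat" where
  "divprod m = (\<Prod>d\<in>{d. d dvd m}. d)"

definition udivprod :: "nat \<Rightarrow> nat" where
  "udivprod m = (\<Prod>d\<in>{d. d dvd m \<and> coprime d (m div d)}. d)"

definition K_T0Tstar_perfect :: "nat \<Rightarrow> nat \<Rightarrow> bool" where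
  "K_T0Tstar_perfect K n \<longleftrightarrow> 2 \<le> K \<and> 1 < n \<and> divprod (udivprod n) = n ^ K"

end

theory Submission
  imports Defs
begin

definition divs :: "nat \<Rightarrow> nat set" where "divs n = {d. d dvd n}"
definition udivs :: "nat \<Rightarrow> nat set" where "udivs n = {d. d dvd n \<and> coprime d (n div d)}"

lemma finite_divs[simp]: "0 < n \<Longrightarrow> finite (divs n)"
  unfolding divs_def by simp
lemma finite_udivs[simp]: "0 < n \<Longrightarrow> finite (udivs n)"
  by (rule finite_subset[of _ "divs n"]) (auto simp: divs_def udivs_def)

lemma decomp: "coprime (a::nat) b \<Longrightarrow> d dvd a * b \<Longrightarrow> d = gcd d a * gcd d b"
  by (smt (verit, best) coprime_commute coprime_divisors
    coprime_dvd_mult_left_iff division_decomp dvd_triv_left gcd.commute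
    gcd_mult_right_left_cancel gcd_mult_right_right_cancel
    gcd_nat.absorb_iff2)

lemma gcd_recover:
  assumes "coprime (a::nat) b" "x dvd a" "y dvd b"
  shows "gcd (x*y) a = x"
proof -
  have "coprime a y" using coprime_divisors[OF dvd_refl assms(3) assms(1)] .
  hence "gcd (x*y) a = gcd x a" by (rule gcd_mult_left_right_cancel)
  thus ?thesis using assms(2) by (simp add: gcd_nat.absorb1)
qed

lemma mult_inj:
  assumes "coprime (a::nat) b"
  shows "inj_on (\<lambda>(x,y). x*y) (divs a \<times> divs b)"
proof (rule inj_onI, clarsimp simp: divs_def)
  fix x y x' y' assume h: "x dvd a" "y dvd b" "x' dvd a" "y' dvd b" "x*y = x'*y'"
  have "x = x'" using gcd_recover[OF assms h(1,2)] gcd_recover[OF assms h(3,4)] h(5) by simp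
  moreover have "y = y'" using gcd_recover[OF assms[unfolded coprime_commute[of a]] h(2,1)]
    gcd_recover[OF assms[unfolded coprime_commute[of a]] h(4,3)] h(5) by (simp add: mult.commute)
  ultimately show "x = x' \<and> y = y'" by simp
qed

lemma divs_mult: "coprime (a::nat) b \<Longrightarrow> divs (a*b) = (\<lambda>(x,y). x*y) ` (divs a \<times> divs b)"
proof (auto simp: divs_def mult_dvd_mono)
  fix d assume "coprime a b" "d dvd a*b"
  thus "d \<in> (\<lambda>(x,y). x*y) ` ({d. d dvd a} \<times> {d. d dvd b})"
    using decomp by (intro image_eqI[of _ _ "(gcd d a, gcd d b)"]) auto
qed

lemma tau_mult: "coprime (a::nat) b \<Longrightarrow> 0 < a \<Longrightarrow> 0 < b \<Longrightarrow> card (divs (a*b)) = card (divs a) * card (divs b)"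
  by (simp add: divs_mult card_image mult_inj card_cartesian_product)

lemma div_dvd_self': "(y::nat) dvd b \<Longrightarrow> b div y dvd b"
  by (cases "y = 0") (auto elim!: dvdE)

lemma unit_iff:
  assumes "coprime (a::nat) b" "x dvd a" "y dvd b"
  shows "coprime (x*y) (a*b div (x*y)) \<longleftrightarrow> coprime x (a div x) \<and> coprime y (b div y)"
proof -
  have e: "a*b div (x*y) = (a div x) * (b div y)"
    using assms(2,3) by (auto elim!: dvdE simp: ac_simps)
  have c1: "coprime x (b div y)"
    using coprime_divisors[OF assms(2) div_dvd_self'[OF assms(3)] assms(1)] .
  have c2: "coprime y (a div x)"
    using coprime_divisors[OF assms(3) div_dvd_self'[OF assms(2)]] assms(1)
    by (simp add: coprime_commute)
  show ?thesis unfolding e using c1 c2 by auto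
qed

lemma udivs_mult:
  assumes ab: "coprime (a::nat) b"
  shows "udivs (a*b) = (\<lambda>(x,y). x*y) ` (udivs a \<times> udivs b)"
proof (intro equalityI subsetI)
  fix z assume "z \<in> (\<lambda>(x,y). x*y) ` (udivs a \<times> udivs b)"
  then obtain x y where z: "z = x*y" "x dvd a" "y dvd b" "coprime x (a div x)" "coprime y (b div y)"
    by (auto simp: udivs_def)
  thus "z \<in> udivs (a*b)" using unit_iff[OF ab z(2,3)] by (auto simp: udivs_def mult_dvd_mono)
next
  fix d assume "d \<in> udivs (a*b)"
  hence h: "d dvd a*b" "coprime d (a*b div d)" by (auto simp: udivs_def)
  define x where "x = gcd d a"
  define y where "y = gcd d b"
  have d: "d = x * y" using decomp ab h(1) unfolding x_def y_def by blast
  have xa: "x dvd a" and yb: "y dvd b" unfolding x_def y_def by simp_all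
  have "coprime (x*y) (a*b div (x*y))" using h(2) d by simp
  hence "coprime x (a div x) \<and> coprime y (b div y)"
    using unit_iff[OF ab xa yb] by simp
  thus "d \<in> (\<lambda>(x,y). x*y) ` (udivs a \<times> udivs b)"
    using d xa yb by (intro image_eqI[of _ _ "(x, y)"]) (auto simp: udivs_def)
qed

lemma u_mult: "coprime (a::nat) b \<Longrightarrow> 0 < a \<Longrightarrow> 0 < b \<Longrightarrow> card (udivs (a*b)) = card (udivs a) * card (udivs b)"
proof -
  assume h: "coprime a b" "0 < a" "0 < b"
  have "inj_on (\<lambda>(x,y). x*y) (udivs a \<times> udivs b)"
    by (rule inj_on_subset[OF mult_inj[OF h(1)]]) (auto simp: divs_def udivs_def)
  thus ?thesis using h by (simp add: udivs_mult card_image card_cartesian_product)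
qed

lemma tau_pp: "prime (p::nat) \<Longrightarrow> card (divs (p^a)) = a + 1"
proof -
  assume p: "prime p"
  have "divs (p^a) = (\<lambda>i. p^i) ` {..a}" using divides_primepow_nat[OF p] by (auto simp: divs_def)
  moreover have "inj_on (\<lambda>i. p^i) {..a}" using p prime_gt_1_nat by (auto simp: inj_on_def)
  ultimately show ?thesis by (simp add: card_image)
qed

lemma u_pp: "prime (p::nat) \<Longrightarrow> 0 < a \<Longrightarrow> card (udivs (p^a)) = 2"
proof -
  assume p: "prime p" and a: "0 < a"
  have "udivs (p^a) = {1, p^a}"
  proof (intro equalityI subsetI)
    fix d assume "d \<in> {1, p^a}"
    thus "d \<in> udivs (p^a)" using p prime_gt_0_nat by (auto simp: udivs_def)
  next
    fix d assume "d \<in> udivs (p^a)"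
    hence "d dvd p^a" "coprime d (p^a div d)" by (auto simp: udivs_def)
    show "d \<in> {1, p^a}"
    proof (cases "d = 1")
      case False
      obtain i where i: "i \<le> a" "d = p^i" using divides_primepow_nat[OF p] \<open>d dvd p^a\<close> by blast
      have "p^a div p^i = p^(a-i)" using i p prime_gt_0_nat by (simp add: power_diff)
      hence "coprime (p^i) (p^(a-i))" using i \<open>coprime d (p^a div d)\<close> by simp
      hence "i = 0 \<or> a - i = 0" using p by auto
      thus ?thesis using i False by auto
    qed simp
  qed
  moreover have "p^a \<noteq> 1" using p a prime_gt_1_nat[OF p] by simp
  ultimately show ?thesis by (metis card_2_iff)
qed


lemma divdiv: "(d::nat) dvd N \<Longrightarrow> 0 < N \<Longrightarrow> N div (N div d) = d"
  by (auto elim!: dvdE)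

lemma prod_sq:
  assumes "finite S" "0 < (N::nat)" "\<And>d. d \<in> S \<Longrightarrow> d dvd N" "\<And>d. d \<in> S \<Longrightarrow> N div d \<in> S"
  shows "(\<Prod>S)^2 = N ^ card S"
proof -
  have "(\<Prod>d\<in>S. d) = (\<Prod>d\<in>S. N div d)"
    by (rule prod.reindex_bij_witness[of S "\<lambda>d. N div d" "\<lambda>d. N div d"])
       (use assms divdiv in auto)
  hence "(\<Prod>S)^2 = (\<Prod>d\<in>S. d) * (\<Prod>d\<in>S. N div d)" by (simp add: power2_eq_square)
  also have "\<dots> = (\<Prod>d\<in>S. d * (N div d))" by (simp add: prod.distrib)
  also have "\<dots> = (\<Prod>d\<in>S. N)" using assms(3) by (intro prod.cong) auto
  finally show ?thesis by simp
qed

lemma divprod_sq: "0 < N \<Longrightarrow> divprod N ^ 2 = N ^ card (divs N)"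
  unfolding divprod_def divs_def
  by (rule prod_sq) (auto simp: div_dvd_div[of _ N N, symmetric])

lemma udivprod_sq: "0 < N \<Longrightarrow> udivprod N ^ 2 = N ^ card (udivs N)"
  unfolding udivprod_def udivs_def
proof (rule prod_sq)
  fix d assume N: "0 < N" and d: "d \<in> {d. d dvd N \<and> coprime d (N div d)}"
  hence "N div (N div d) = d" by auto
  thus "N div d \<in> {d. d dvd N \<and> coprime d (N div d)}" using d by (auto simp: coprime_commute)
qed auto

lemma cop_rest:
  assumes "finite F" "prime (p::nat)" "p \<notin> F" "\<forall>q\<in>F. prime q"
  shows "coprime (p ^ g p) (\<Prod>q\<in>F. q ^ g q)"
proof (rule prod_coprime_right)
  fix q assume "q \<in> F"
  hence "coprime p q" using assms primes_coprime by metis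
  thus "coprime (p ^ g p) (q ^ g q)" by simp
qed

lemma divs1: "card (divs (Suc 0)) = Suc 0" by (simp add: divs_def)
lemma udivs1: "card (udivs (Suc 0)) = Suc 0"
proof -
  have "udivs (Suc 0) = {Suc 0}"
  proof (intro equalityI subsetI)
    fix d assume "d \<in> udivs (Suc 0)" thus "d \<in> {Suc 0}" by (simp add: udivs_def)
  next
    fix d assume "d \<in> {Suc 0}" thus "d \<in> udivs (Suc 0)" by (simp add: udivs_def)
  qed
  thus ?thesis by simp
qed

lemma tau_form: "finite P \<Longrightarrow> \<forall>p\<in>P. prime (p::nat) \<Longrightarrow>
   card (divs (\<Prod>p\<in>P. p ^ g p)) = (\<Prod>p\<in>P. g p + 1)"
proof (induction P rule: finite_induct)
  case empty
  then show ?case by (simp add: divs1)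
next
  case (insert p F)
  let ?R = "(\<Prod>q\<in>F. q ^ g q)"
  have pos: "0 < ?R" using insert prime_gt_0_nat by (auto intro: prod_pos)
  have pp: "prime p" using insert by simp
  have pp0: "0 < p ^ g p" using pp prime_gt_0_nat by simp
  have cp: "coprime (p ^ g p) ?R" using cop_rest[of F p g] insert by simp
  have "card (divs (\<Prod>q\<in>insert p F. q ^ g q)) = card (divs (p ^ g p * ?R))"
    using insert by simp
  also have "\<dots> = card (divs (p ^ g p)) * card (divs ?R)" by (rule tau_mult[OF cp pp0 pos])
  also have "\<dots> = (g p + 1) * (\<Prod>q\<in>F. g q + 1)" using tau_pp[OF pp] insert by simp
  finally show ?case using insert by simp
qed

lemma u_form: "finite P \<Longrightarrow> \<forall>p\<in>P. prime (p::nat) \<and> 0 < g p \<Longrightarrow>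
   card (udivs (\<Prod>p\<in>P. p ^ g p)) = 2 ^ card P"
proof (induction P rule: finite_induct)
  case empty
  then show ?case by (simp add: udivs1)
next
  case (insert p F)
  let ?R = "(\<Prod>q\<in>F. q ^ g q)"
  have pos: "0 < ?R" using insert prime_gt_0_nat by (auto intro: prod_pos)
  have pp: "prime p" "0 < g p" using insert by simp_all
  have pp0: "0 < p ^ g p" using pp prime_gt_0_nat by simp
  have cp: "coprime (p ^ g p) ?R" using cop_rest[of F p g] insert by simp
  have "card (udivs (\<Prod>q\<in>insert p F. q ^ g q)) = card (udivs (p ^ g p * ?R))"
    using insert by simp
  also have "\<dots> = card (udivs (p ^ g p)) * card (udivs ?R)" by (rule u_mult[OF cp pp0 pos])
  also have "\<dots> = 2 * 2 ^ card F" using u_pp[OF pp] insert by simp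
  finally show ?case using insert by simp
qed

lemma perfect_iff:
  assumes P: "finite P" "P \<noteq> {}" "\<forall>p\<in>P. prime (p::nat) \<and> 0 < f p"
    and n: "n = (\<Prod>p\<in>P. p ^ f p)"
  shows "K_T0Tstar_perfect K n \<longleftrightarrow>
     2 \<le> K \<and> 2^(card P - 1) * (\<Prod>p\<in>P. 2^(card P - 1) * f p + 1) = 2*K"
proof -
  define s where "s = card P"
  define e where "e = (2::nat)^(s-1)"
  have s1: "1 \<le> s" using P by (simp add: s_def Suc_le_eq card_gt_0_iff)
  have npos: "0 < n" using P n prime_gt_0_nat by (auto intro: prod_pos)
  obtain p where p: "p \<in> P" using P by blast
  have dv: "p ^ f p dvd n" unfolding n using P(1) p by (rule dvd_prodI)
  have "prime p" "0 < f p" using p P(3) by auto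
  hence gt: "1 < p ^ f p" using prime_gt_1_nat[OF \<open>prime p\<close>] one_less_power[of p "f p"] by simp
  have "p ^ f p \<le> n" using dv npos by (rule dvd_imp_le)
  hence n1: "1 < n" using gt by linarith
  have "udivprod n ^ 2 = n ^ (2^s)"
    using udivprod_sq[OF npos] u_form[OF P(1), of f] P(3) n by (simp add: s_def)
  also have "n ^ (2^s) = (n ^ e) ^ 2" using s1 unfolding e_def
    by (metis One_nat_def Suc_diff_le diff_Suc_1 mult.commute power_Suc power_mult)
  finally have U: "udivprod n = n ^ e" by (simp add: power_eq_iff_eq_base)
  have N: "n ^ e = (\<Prod>p\<in>P. p ^ (e * f p))"
    unfolding n prod_power_distrib by (intro prod.cong refl) (simp add: power_mult[symmetric] mult.commute)
  have tau: "card (divs (n ^ e)) = (\<Prod>p\<in>P. e * f p + 1)"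
    unfolding N using tau_form[OF P(1), of "\<lambda>p. e * f p"] P(3) by simp
  have D: "divprod (n ^ e) ^ 2 = n ^ (e * (\<Prod>p\<in>P. e * f p + 1))"
    using divprod_sq[of "n^e"] npos tau by (simp add: power_mult)
  have "divprod (n ^ e) = n ^ K \<longleftrightarrow> divprod (n ^ e) ^ 2 = (n ^ K) ^ 2"
    by (simp add: power_eq_iff_eq_base)
  also have "\<dots> \<longleftrightarrow> e * (\<Prod>p\<in>P. e * f p + 1) = 2 * K"
    unfolding D using n1 by (simp add: power_mult[symmetric] mult.commute)
  finally show ?thesis unfolding K_T0Tstar_perfect_def U using n1 by (simp add: e_def s_def)
qed


lemma pow2_odd:
  assumes "(2::nat)^a * x = 2^b * y" "odd x" "odd y"
  shows "a = b \<and> x = y"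
proof -
  have "\<not> a < b"
  proof
    assume "a < b"
    hence "(2::nat)^b = 2^a * 2^(b-a)" by (simp add: power_add[symmetric])
    hence "x = 2^(b-a) * y" using assms(1) by simp
    thus False using assms(2) \<open>a < b\<close> by simp
  qed
  moreover have "\<not> b < a"
  proof
    assume "b < a"
    hence "(2::nat)^a = 2^b * 2^(a-b)" by (simp add: power_add[symmetric])
    hence "y = 2^(a-b) * x" using assms(1) by simp
    thus False using assms(3) \<open>b < a\<close> by simp
  qed
  ultimately have "a = b" by simp
  thus ?thesis using assms(1) by simp
qed

lemma odd_prod: "finite A \<Longrightarrow> (\<forall>x\<in>A. odd (g x)) \<Longrightarrow> odd (\<Prod>x\<in>A. (g x::nat))"
  by (induction A rule: finite_induct) auto

lemma cong1_div:
  assumes "1 < (x::nat)" "[x = 1] (mod M)"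
  shows "M * ((x - 1) div M) + 1 = x"
proof -
  have "M dvd x - 1" using assms cong_altdef_nat[of 1 x M] by simp
  thus ?thesis using assms by simp
qed

lemma K2_aux: "0 < (m::nat) \<Longrightarrow> 0 < (k::nat) \<Longrightarrow> 2 \<le> (2::nat)^m * k"
proof -
  assume "0 < m" "0 < k"
  have "(2::nat) \<le> 2^m" using \<open>0 < m\<close> by (metis One_nat_def Suc_leI power_increasing_iff power_one_right one_less_numeral_iff semiring_norm(76))
  moreover have "1 \<le> k" using \<open>0 < k\<close> by simp
  ultimately show ?thesis by (metis mult.right_neutral mult_le_mono)
qed

theorem mainTheorem12:
  fixes k m :: nat
  assumes "odd k" and "0 < k" and "0 < m"
  shows "(\<forall>p::nat. prime p \<longrightarrow> K_T0Tstar_perfect (2^m * k) (p ^ (2^(m+1) * k - 1)))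
    \<and> (1 < k \<longrightarrow>
        (\<forall>d :: nat \<Rightarrow> nat.
           (\<forall>i<m+2. 1 < d i \<and> [d i = 1] (mod 2^(m+1))) \<and> (\<Prod>i<m+2. d i) = k \<longrightarrow>
           (\<forall>p :: nat \<Rightarrow> nat. (\<forall>i<m+2. prime (p i)) \<and> inj_on p {..<m+2} \<longrightarrow>
              K_T0Tstar_perfect (2^m * k) (\<Prod>i<m+2. p i ^ ((d i - 1) div 2^(m+1))))))
    \<and> (\<forall>n::nat. 1 < n \<and> K_T0Tstar_perfect (2^m * k) n \<longrightarrow>
        (\<exists>p::nat. prime p \<and> n = p ^ (2^(m+1) * k - 1))
        \<or> (\<exists>(d :: nat \<Rightarrow> nat) (p :: nat \<Rightarrow> nat).
             (\<forall>i<m+2. 1 < d i \<and> [d i = 1] (mod 2^(m+1))) \<and> (\<Prod>i<m+2. d i) = k \<and>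
             (\<forall>i<m+2. prime (p i)) \<and> inj_on p {..<m+2} \<and>
             n = (\<Prod>i<m+2. p i ^ ((d i - 1) div 2^(m+1)))))"
proof (intro conjI allI impI)
  fix p :: nat assume p: "prime p"
  define a where "a = 2^(m+1) * k - 1"
  have a1: "a + 1 = 2 * (2^m * k)" using assms(2) unfolding a_def by simp
  have "K_T0Tstar_perfect (2^m * k) (\<Prod>q\<in>{p}. q ^ (\<lambda>_. a) q)"
    by (subst perfect_iff[of "{p}" "\<lambda>_. a"]) (use p a1 K2_aux[OF assms(3) assms(2)] in auto)
  thus "K_T0Tstar_perfect (2^m * k) (p ^ (2^(m+1) * k - 1))" by (simp add: a_def)
next
  fix d p :: "nat \<Rightarrow> nat"
  assume d: "(\<forall>i<m+2. 1 < d i \<and> [d i = 1] (mod 2^(m+1))) \<and> (\<Prod>i<m+2. d i) = k"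
    and p: "(\<forall>i<m+2. prime (p i)) \<and> inj_on p {..<m+2}"
  define M :: nat where "M = 2^(m+1)"
  define e where "e i = (d i - 1) div M" for i
  define P where "P = p ` {..<m+2}"
  define f where "f q = e (the_inv_into {..<m+2} p q)" for q
  have fp: "f (p i) = e i" if "i < m+2" for i
    unfolding f_def using p that by (simp add: the_inv_into_f_f)
  have de: "M * e i + 1 = d i" if "i < m+2" for i
    unfolding e_def M_def using cong1_div d that by blast
  have epos: "0 < e i" if "i < m+2" for i
  proof (rule ccontr)
    assume "\<not> 0 < e i" hence "d i = 1" using de[OF that] by simp
    moreover have "1 < d i" using d that by blast
    ultimately show False by simp
  qed
  have cardP: "card P = m + 2" unfolding P_def using p by (simp add: card_image)
  have nform: "(\<Prod>i<m+2. p i ^ ((d i - 1) div 2^(m+1))) = (\<Prod>q\<in>P. q ^ f q)"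
    unfolding P_def using p by (subst prod.reindex) (auto simp: fp e_def M_def)
  have Tform: "(\<Prod>q\<in>P. 2^(card P - 1) * f q + 1) = k"
  proof -
    have "(\<Prod>q\<in>P. 2^(card P - 1) * f q + 1) = (\<Prod>q\<in>P. M * f q + 1)"
      unfolding cardP M_def by simp
    also have "\<dots> = (\<Prod>i<m+2. M * f (p i) + 1)"
      unfolding P_def using p by (subst prod.reindex) auto
    also have "\<dots> = (\<Prod>i<m+2. M * e i + 1)" using fp by (intro prod.cong) auto
    also have "\<dots> = (\<Prod>i<m+2. d i)" using de by (intro prod.cong) auto
    finally show ?thesis using d by simp
  qed
  show "K_T0Tstar_perfect (2^m * k) (\<Prod>i<m+2. p i ^ ((d i - 1) div 2^(m+1)))"
    unfolding nform
  proof (subst perfect_iff[of P f])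
    show "finite P" "P \<noteq> {}" unfolding P_def by auto
    show "\<forall>p\<in>P. prime p \<and> 0 < f p" unfolding P_def using p epos fp by auto
  qed (use K2_aux[OF assms(3) assms(2)] Tform cardP in auto)
next
  fix n :: nat
  assume n: "1 < n \<and> K_T0Tstar_perfect (2^m * k) n"
  define P where "P = prime_factors n"
  define f where "f q = multiplicity q n" for q
  have finP: "finite P" unfolding P_def by simp
  have Pprop: "\<forall>q\<in>P. prime q \<and> 0 < f q"
    unfolding P_def f_def by (auto simp: prime_factors_multiplicity)
  obtain q0 where "prime q0" "q0 dvd n" using prime_factor_nat[of n] n by auto
  hence "q0 \<in> P" using n unfolding P_def by (auto simp: in_prime_factors_iff)
  hence Pne: "P \<noteq> {}" by auto
  have nP: "n = (\<Prod>q\<in>P. q ^ f q)" unfolding P_def f_def using n prime_factorization_nat by auto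
  define s where "s = card P"
  have s1: "1 \<le> s" using finP Pne by (simp add: s_def Suc_le_eq card_gt_0_iff)
  have E: "2^(s - 1) * (\<Prod>q\<in>P. 2^(s - 1) * f q + 1) = 2 * (2^m * k)"
    using perfect_iff[OF finP Pne Pprop nP, of "2^m*k"] n by (simp add: s_def)
  show "(\<exists>p::nat. prime p \<and> n = p ^ (2^(m+1) * k - 1))
        \<or> (\<exists>(d :: nat \<Rightarrow> nat) (p :: nat \<Rightarrow> nat).
             (\<forall>i<m+2. 1 < d i \<and> [d i = 1] (mod 2^(m+1))) \<and> (\<Prod>i<m+2. d i) = k \<and>
             (\<forall>i<m+2. prime (p i)) \<and> inj_on p {..<m+2} \<and>
             n = (\<Prod>i<m+2. p i ^ ((d i - 1) div 2^(m+1))))"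
  proof (cases "s = 1")
    case True
    then obtain q where q: "P = {q}" using card_1_singletonE[of P] s_def by metis
    have "f q + 1 = 2^(m+1) * k" using E True q by simp
    hence "f q = 2^(m+1) * k - 1" by simp
    moreover have "n = q ^ f q" using nP q by simp
    moreover have "prime q" using Pprop q by simp
    ultimately show ?thesis by (intro disjI1 exI[of _ q]) simp
  next
    case False
    hence s2: "2 \<le> s" using s1 by simp
    have oddT: "odd (\<Prod>q\<in>P. 2^(s - 1) * f q + 1)"
      using finP s2 by (intro odd_prod) auto
    have "2^(s-1) * (\<Prod>q\<in>P. 2^(s - 1) * f q + 1) = 2^(m+1) * k" using E by simp
    from pow2_odd[OF this oddT assms(1)]
    have sm: "s - 1 = m + 1" and T: "(\<Prod>q\<in>P. 2^(s - 1) * f q + 1) = k" by auto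
    have cP: "card P = m + 2" using sm s_def s2 by simp
    obtain h where h: "bij_betw h {..<m+2} P"
      using ex_bij_betw_nat_finite[OF finP] cP by (auto simp: atLeast0LessThan)
    define d where "d i = 2^(m+1) * f (h i) + 1" for i
    have hP: "h i \<in> P" if "i < m+2" for i using h that by (auto simp: bij_betw_def)
    have dd: "(d i - 1) div 2^(m+1) = f (h i)" for i by (simp add: d_def)
    have "(\<forall>i<m+2. 1 < d i \<and> [d i = 1] (mod 2^(m+1))) \<and> (\<Prod>i<m+2. d i) = k \<and>
             (\<forall>i<m+2. prime (h i)) \<and> inj_on h {..<m+2} \<and>
             n = (\<Prod>i<m+2. h i ^ ((d i - 1) div 2^(m+1)))"
    proof (intro conjI allI impI)
      fix i assume i: "i < m+2"
      show "1 < d i" using Pprop hP[OF i] by (simp add: d_def)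
      show "[d i = 1] (mod 2^(m+1))" unfolding d_def cong_def by (rule mod_mult_self4)
      show "prime (h i)" using Pprop hP[OF i] by simp
    next
      show "(\<Prod>i<m+2. d i) = k"
        unfolding d_def using prod.reindex_bij_betw[OF h, of "\<lambda>q. 2^(m+1) * f q + 1"] T sm by simp
      show "inj_on h {..<m+2}" using h by (simp add: bij_betw_def)
      show "n = (\<Prod>i<m+2. h i ^ ((d i - 1) div 2^(m+1)))"
        unfolding dd using prod.reindex_bij_betw[OF h, of "\<lambda>q. q ^ f q"] nP by simp
    qed
    thus ?thesis by blast
  qed
qed

end
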